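(* Let $\Gamma$ be a finite abelian group of order $n \ge 3$ and let $G = \mathrm{Cay}(\Gamma, S)$ be a Cayley graph on $\Gamma$. Then $\frac{\lambda_3(G)}{n} \le \frac13$.
   Context: For a group $\Gamma$ with identity $e$ and a subset $S \subseteq \Gamma$ with $e \notin S$ and $S = S^{-1}$, the Cayley graph $\mathrm{Cay}(\Gamma,S)$ has vertex set $\Gamma$, with $s_1 \sim s_2$ if and only if $s_1 s_2^{-1} \in S$. $\lambda_3$ denotes the third largest eigenvalue (with multiplicity) of the adjacency matrix. *)

theory Defs
  imports "Jordan_Normal_Form.Char_Poly" "HOL-Library.Multiset" "HOL-Library.Cardinality"
begin

definition elem_enum :: "nat \<Rightarrow> 'a::finite" where
  "elem_enum = (SOME f. bij_betw f {..<CARD('a)} (UNIV :: 'a set))"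

text \<open>Adjacency matrix of the Cayley graph Cay(Gamma,S) on an (additively written)
  group Gamma: s1 ~ s2 iff s1 s2^{-1} \<in> S, i.e. s1 - s2 \<in> S.\<close>
definition cayley_adj :: "'a::{group_add,finite} set \<Rightarrow> real mat" where
  "cayley_adj S = mat CARD('a) CARD('a)
     (\<lambda>(i,j). if elem_enum i - elem_enum j \<in> S then 1 else 0)"

definition eig_mset :: "real mat \<Rightarrow> real multiset" where
  "eig_mset A = Abs_multiset (\<lambda>x. order x (char_poly A))"

definition kth_largest_eig :: "nat \<Rightarrow> real mat \<Rightarrow> real" where
  "kth_largest_eig k A = rev (sorted_list_of_multiset (eig_mset A)) ! (k - 1)"

end

theory Submission
  imports Defs
begin

primrec nmul :: "nat \<Rightarrow> 'a::monoid_add \<Rightarrow> 'a" where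
  "nmul 0 g = 0" | "nmul (Suc j) g = g + nmul j g"

lemma nmul_add: "nmul (i + j) g = nmul i g + nmul j (g::'a::monoid_add)"
  by (induct i) (simp_all add: add.assoc)

lemma nmul_mult: "nmul (i * j) g = nmul i (nmul j (g::'a::monoid_add))"
  by (induct i) (simp_all add: nmul_add)

definition subgrp :: "'a::ab_group_add set \<Rightarrow> bool" where
  "subgrp H \<longleftrightarrow> 0 \<in> H \<and> (\<forall>a\<in>H. \<forall>b\<in>H. a + b \<in> H) \<and> (\<forall>a\<in>H. - a \<in> H)"

definition char_on :: "'a::ab_group_add set \<Rightarrow> ('a \<Rightarrow> complex) \<Rightarrow> bool" where
  "char_on H \<chi> \<longleftrightarrow> (\<forall>a\<in>H. \<forall>b\<in>H. \<chi> (a + b) = \<chi> a * \<chi> b) \<and> (\<forall>a\<in>H. \<chi> a \<noteq> 0)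
     \<and> (\<forall>a. a \<notin> H \<longrightarrow> \<chi> a = 0)"

lemma nmul_in: "subgrp H \<Longrightarrow> g \<in> H \<Longrightarrow> nmul j g \<in> H"
  by (induct j) (auto simp: subgrp_def)

lemma char_on_0: assumes "char_on H \<phi>" "subgrp H" shows "\<phi> 0 = 1"
proof -
  have "\<phi> 0 = \<phi> 0 * \<phi> 0" using assms unfolding char_on_def subgrp_def
    by (metis add_0)
  moreover have "\<phi> 0 \<noteq> 0" using assms unfolding char_on_def subgrp_def by auto
  ultimately show ?thesis by (metis mult_cancel_right2)
qed

lemma char_on_nmul: assumes "char_on H \<phi>" "subgrp H" "g \<in> H"
  shows "\<phi> (nmul j g) = \<phi> g ^ j"
proof (induct j)
  case 0 then show ?case using char_on_0[OF assms(1,2)] by simp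
next
  case (Suc j)
  have "\<phi> (g + nmul j g) = \<phi> g * \<phi> (nmul j g)"
    using assms nmul_in[OF assms(2,3)] unfolding char_on_def by blast
  then show ?case using Suc by simp
qed

lemma order_exists: "\<exists>k>0. nmul k (g::'a::{group_add,finite}) = 0"
proof -
  have "\<not> inj (\<lambda>j::nat. nmul j g)"
  proof
    assume "inj (\<lambda>j::nat. nmul j g)"
    then have "infinite (range (\<lambda>j::nat. nmul j g))"
      using finite_imageD infinite_UNIV_nat by blast
    then show False by simp
  qed
  then obtain i j where ij: "i \<noteq> j" "nmul i g = nmul j g" unfolding inj_def by blast
  { fix i j assume "i < j" "nmul i g = nmul (j::nat) g"
    then have "nmul j g = nmul (j - i) g + nmul i g" using nmul_add[of "j-i" i g] by simp
    with \<open>nmul i g = nmul j g\<close> have "nmul (j - i) g = 0"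
      by (metis add.left_neutral add_right_cancel)
    then have "\<exists>k>0. nmul k g = 0" using \<open>i < j\<close> by (intro exI[of _ "j - i"]) auto }
  note * = this
  show ?thesis using ij *[of i j] *[of j i] by (cases "i < j") auto
qed

lemma subgrp_diff: "subgrp H \<Longrightarrow> a + b \<in> H \<Longrightarrow> b \<in> H \<Longrightarrow> a \<in> H"
  unfolding subgrp_def by (metis add.assoc add.right_inverse add_0_right)

lemma card_nth_roots: assumes "c \<noteq> 0" "0 < k" shows "card {w::complex. w ^ k = c} = k"
  using bij_betw_same_card[OF bij_betw_nth_root_unity[OF assms]] card_roots_unity_eq[OF assms(2)]
  by simp

lemma extend_step:
  fixes H :: "'a::{ab_group_add,finite} set"
  assumes sH: "subgrp H" and gH: "g \<notin> H" and fC: "finite C" and cC: "\<forall>\<phi>\<in>C. char_on H \<phi>"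
    and le: "card H \<le> card C"
  shows "\<exists>H' C'. subgrp H' \<and> H \<subset> H' \<and> finite C' \<and> (\<forall>\<psi>\<in>C'. char_on H' \<psi>) \<and> card H' \<le> card C'"
proof -
  define k where "k = (LEAST k. 0 < k \<and> nmul k g \<in> H)"
  have ex: "\<exists>k. 0 < k \<and> nmul k g \<in> H" using order_exists[of g] sH by (auto simp: subgrp_def)
  have k: "0 < k" "nmul k g \<in> H" using LeastI_ex[OF ex] unfolding k_def by auto
  have kmin: "nmul j g \<notin> H" if "0 < j" "j < k" for j
    using not_less_Least[of j "\<lambda>k. 0 < k \<and> nmul k g \<in> H"] that unfolding k_def by blast
  have nmk: "nmul (q * k) g \<in> H" for q
    using nmul_mult[of q k g] nmul_in[OF sH k(2), of q] by simp
  have inH_iff: "nmul j g \<in> H \<longleftrightarrow> k dvd j" for j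
  proof -
    have e: "nmul j g = nmul (j mod k) g + nmul (j div k * k) g"
      by (metis mod_div_mult_eq nmul_add)
    have "nmul j g \<in> H \<longleftrightarrow> nmul (j mod k) g \<in> H"
      using nmk[of "j div k"] sH subgrp_diff[OF sH, of "nmul (j mod k) g"] e
      by (auto simp: subgrp_def)
    also have "\<dots> \<longleftrightarrow> j mod k = 0" using kmin[of "j mod k"] k sH
      by (cases "j mod k = 0") (auto simp: subgrp_def)
    finally show ?thesis by (simp add: dvd_eq_mod_eq_0)
  qed
  define H' where "H' = {h + nmul j g | h j. h \<in> H}"
  have HH': "H \<subset> H'"
  proof -
    have "H \<subseteq> H'"
    proof
      fix x assume "x \<in> H" then show "x \<in> H'" unfolding H'_def
        by (intro CollectI exI[of _ x] exI[of _ 0]) simp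
    qed
    moreover have "g \<in> H'" unfolding H'_def using sH
      by (auto simp: subgrp_def intro!: exI[of _ 0] exI[of _ 1])
    ultimately show ?thesis using gH by auto
  qed
  have sH': "subgrp H'"
    unfolding subgrp_def
  proof (intro conjI ballI)
    show "0 \<in> H'" unfolding H'_def using sH by (auto simp: subgrp_def intro!: exI[of _ 0] exI[of _ 0])
  next
    fix a b assume "a \<in> H'" "b \<in> H'"
    then obtain h1 j1 h2 j2 where "a = h1 + nmul j1 g" "h1 \<in> H" "b = h2 + nmul j2 g" "h2 \<in> H"
      unfolding H'_def by auto
    then show "a + b \<in> H'" unfolding H'_def using sH
      by (auto simp: subgrp_def nmul_add algebra_simps intro!: exI[of _ "h1 + h2"] exI[of _ "j1 + j2"])
  next
    fix a assume "a \<in> H'"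
    then obtain h j where a: "a = h + nmul j g" "h \<in> H" unfolding H'_def by auto
    have e: "nmul (k * j) g = nmul ((k - 1) * j) g + nmul j g"
      using nmul_add[of "(k - 1) * j" j g] k(1)
      by (metis Suc_diff_1 mult_Suc mult.commute add.commute)
    have "- h - nmul (k * j) g \<in> H" using sH a(2) nmk[of j]
      by (auto simp: subgrp_def mult.commute) (metis diff_conv_add_uminus minus_add_distrib add.commute)
    moreover have "- a = (- h - nmul (k * j) g) + nmul ((k - 1) * j) g"
      using a(1) e by (simp add: algebra_simps)
    ultimately show "- a \<in> H'" unfolding H'_def by blast
  qed
  have card_H': "card H' \<le> card H * k"
  proof -
    have "H' \<subseteq> (\<lambda>(h, j). h + nmul j g) ` (H \<times> {..<k})"
    proof
      fix x assume "x \<in> H'"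
      then obtain h j where x: "x = h + nmul j g" "h \<in> H" unfolding H'_def by auto
      have e: "nmul j g = nmul (j mod k) g + nmul (j div k * k) g"
        by (metis mod_div_mult_eq nmul_add)
      have "x = (h + nmul (j div k * k) g) + nmul (j mod k) g" using x e by (simp add: algebra_simps)
      moreover have "h + nmul (j div k * k) g \<in> H" using sH x(2) nmk by (auto simp: subgrp_def)
      moreover have "j mod k < k" using k(1) by simp
      ultimately show "x \<in> (\<lambda>(h, j). h + nmul j g) ` (H \<times> {..<k})" by force
    qed
    then have "card H' \<le> card ((\<lambda>(h, j). h + nmul j g) ` (H \<times> {..<k}))"
      by (intro card_mono) auto
    also have "\<dots> \<le> card (H \<times> {..<k})" by (rule card_image_le) auto
    finally show ?thesis by (simp add: card_cartesian_product)
  qed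
  have wd0: "\<phi> h1 * w ^ j1 = \<phi> h2 * w ^ j2"
    if \<phi>: "char_on H \<phi>" and w: "w ^ k = \<phi> (nmul k g)" and h: "h1 \<in> H" "h2 \<in> H"
      and eq: "h1 + nmul j1 g = h2 + nmul j2 g" and le: "j1 \<le> j2" for \<phi> w h1 h2 j1 j2
  proof -
    define d where "d = j2 - j1"
    have "nmul j2 g = nmul d g + nmul j1 g" using nmul_add[of d j1 g] le d_def by simp
    with eq have h1eq: "h1 = h2 + nmul d g" by (simp add: algebra_simps)
    then have dH: "nmul d g \<in> H" using h sH subgrp_diff[OF sH, of "nmul d g" h2]
      by (simp add: add.commute)
    then obtain q where dq: "d = k * q" using inH_iff by (auto elim: dvdE)
    have "\<phi> h1 = \<phi> h2 * \<phi> (nmul d g)" using \<phi> h1eq h(2) dH unfolding char_on_def by auto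
    also have "\<phi> (nmul d g) = \<phi> (nmul q (nmul k g))" using dq nmul_mult[of q k g] by (simp add: mult.commute)
    also have "\<dots> = \<phi> (nmul k g) ^ q" using char_on_nmul[OF \<phi> sH k(2)] .
    also have "\<dots> = w ^ d" using w dq by (simp add: power_mult)
    finally have "\<phi> h1 * w ^ j1 = \<phi> h2 * (w ^ d * w ^ j1)" by simp
    also have "w ^ d * w ^ j1 = w ^ j2" using le d_def by (simp add: power_add[symmetric])
    finally show ?thesis .
  qed
  have wd: "\<phi> h1 * w ^ j1 = \<phi> h2 * w ^ j2"
    if \<phi>: "char_on H \<phi>" and w: "w ^ k = \<phi> (nmul k g)" and h: "h1 \<in> H" "h2 \<in> H"
      and eq: "h1 + nmul j1 g = h2 + nmul j2 g" for \<phi> w h1 h2 j1 j2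
  proof (cases "j1 \<le> j2")
    case True then show ?thesis using wd0[OF \<phi> w h eq] by simp
  next
    case False then show ?thesis using wd0[OF \<phi> w h(2,1) eq[symmetric]] by simp
  qed
  define ext where "ext = (\<lambda>(\<phi>::'a \<Rightarrow> complex) (w::complex) x. if x \<in> H' then
     (let r = (SOME r. fst r \<in> H \<and> x = fst r + nmul (snd r) g) in \<phi> (fst r) * w ^ snd r) else 0)"
  have ext_val: "ext \<phi> w (h + nmul j g) = \<phi> h * w ^ j"
    if "char_on H \<phi>" "w ^ k = \<phi> (nmul k g)" "h \<in> H" for \<phi> w h j
  proof -
    let ?x = "h + nmul j g"
    have ex: "\<exists>r. fst r \<in> H \<and> ?x = fst r + nmul (snd r) g" using that by (intro exI[of _ "(h,j)"]) auto
    define r where "r = (SOME r. fst r \<in> H \<and> ?x = fst r + nmul (snd r) g)"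
    have r: "fst r \<in> H" "?x = fst r + nmul (snd r) g" using someI_ex[OF ex] unfolding r_def by auto
    have "?x \<in> H'" using that unfolding H'_def by auto
    then have "ext \<phi> w ?x = \<phi> (fst r) * w ^ snd r" unfolding ext_def r_def Let_def by simp
    also have "\<dots> = \<phi> h * w ^ j" using wd[OF that(1,2) r(1) that(3)] r(2) by simp
    finally show ?thesis .
  qed
  have ext_char: "char_on H' (ext \<phi> w)" if \<phi>: "char_on H \<phi>" and w: "w ^ k = \<phi> (nmul k g)" for \<phi> w
  proof -
    have "\<phi> (nmul k g) \<noteq> 0" using \<phi> k(2) unfolding char_on_def by auto
    then have w0: "w \<noteq> 0" using w k(1) by (auto simp: zero_power)
    show ?thesis unfolding char_on_def
    proof (intro conjI ballI allI impI)
      fix a b assume "a \<in> H'" "b \<in> H'"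
      then obtain h1 j1 h2 j2 where ab: "a = h1 + nmul j1 g" "h1 \<in> H" "b = h2 + nmul j2 g" "h2 \<in> H"
        unfolding H'_def by auto
      then have ab': "a + b = (h1 + h2) + nmul (j1 + j2) g" by (simp add: nmul_add algebra_simps)
      have hh: "h1 + h2 \<in> H" using sH ab by (auto simp: subgrp_def)
      have "\<phi> (h1 + h2) = \<phi> h1 * \<phi> h2" using \<phi> ab unfolding char_on_def by auto
      then show "ext \<phi> w (a + b) = ext \<phi> w a * ext \<phi> w b"
        unfolding ab' using ext_val[OF \<phi> w hh] ext_val[OF \<phi> w ab(2)] ext_val[OF \<phi> w ab(4)] ab
        by (simp add: power_add)
    next
      fix a assume "a \<in> H'"
      then obtain h j where a: "a = h + nmul j g" "h \<in> H" unfolding H'_def by auto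
      have "\<phi> h \<noteq> 0" using \<phi> a unfolding char_on_def by auto
      then show "ext \<phi> w a \<noteq> 0" using ext_val[OF \<phi> w a(2)] a w0 by simp
    next
      fix a assume "a \<notin> H'" then show "ext \<phi> w a = 0" unfolding ext_def by simp
    qed
  qed
  define R where "R = (\<lambda>\<phi>::'a \<Rightarrow> complex. {w::complex. w ^ k = \<phi> (nmul k g)})"
  have cardR: "card (R \<phi>) = k" if "\<phi> \<in> C" for \<phi>
  proof -
    have "\<phi> (nmul k g) \<noteq> 0" using cC that k(2) unfolding char_on_def by auto
    then show ?thesis unfolding R_def using card_nth_roots k(1) by blast
  qed
  have finR: "finite (R \<phi>)" if "\<phi> \<in> C" for \<phi>
    using cardR[OF that] k(1) card_ge_0_finite by force
  define C' where "C' = (\<lambda>(\<phi>, w). ext \<phi> w) ` (SIGMA \<phi>:C. R \<phi>)"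
  have inj: "inj_on (\<lambda>(\<phi>, w). ext \<phi> w) (SIGMA \<phi>:C. R \<phi>)"
  proof (rule inj_onI, clarify)
    fix \<phi>1 w1 \<phi>2 w2 assume a: "\<phi>1 \<in> C" "w1 \<in> R \<phi>1" "\<phi>2 \<in> C" "w2 \<in> R \<phi>2"
      and e: "ext \<phi>1 w1 = ext \<phi>2 w2"
    have c1: "char_on H \<phi>1" "w1 ^ k = \<phi>1 (nmul k g)" using a cC unfolding R_def by auto
    have c2: "char_on H \<phi>2" "w2 ^ k = \<phi>2 (nmul k g)" using a cC unfolding R_def by auto
    have "\<phi>1 x = \<phi>2 x" for x
    proof (cases "x \<in> H")
      case True
      then show ?thesis using ext_val[OF c1 True, of 0] ext_val[OF c2 True, of 0] e by simp
    next
      case False then show ?thesis using c1 c2 unfolding char_on_def by auto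
    qed
    then have p: "\<phi>1 = \<phi>2" by auto
    have z: "0 \<in> H" using sH by (simp add: subgrp_def)
    have "w1 = w2" using ext_val[OF c1 z, of 1] ext_val[OF c2 z, of 1] e char_on_0[OF c1(1) sH]
      char_on_0[OF c2(1) sH] by simp
    with p show "\<phi>1 = \<phi>2 \<and> w1 = w2" by simp
  qed
  have "card C' = card (SIGMA \<phi>:C. R \<phi>)" unfolding C'_def by (rule card_image[OF inj])
  also have "\<dots> = (\<Sum>\<phi>\<in>C. card (R \<phi>))" using fC finR by (simp add: card_SigmaI)
  also have "\<dots> = card C * k" using cardR by simp
  finally have cC': "card C' = card C * k" .
  have "finite C'" unfolding C'_def using fC finR by auto
  moreover have "\<forall>\<psi>\<in>C'. char_on H' \<psi>" unfolding C'_def R_def using ext_char cC by auto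
  moreover have "card H' \<le> card C'" using card_H' cC' le by (metis dual_order.trans mult_le_mono1)
  ultimately show ?thesis using sH' HH' by blast
qed

lemma chars_exist:
  "\<exists>C. finite C \<and> (\<forall>\<chi>\<in>C. char_on (UNIV::'a::{ab_group_add,finite} set) \<chi>) \<and> CARD('a) \<le> card C"
proof -
  have main: "\<forall>H::'a set. subgrp H \<and> card (UNIV - H) = m \<and>
      (\<exists>C. finite C \<and> (\<forall>\<chi>\<in>C. char_on H \<chi>) \<and> card H \<le> card C) \<longrightarrow>
      (\<exists>C. finite C \<and> (\<forall>\<chi>\<in>C. char_on (UNIV::'a set) \<chi>) \<and> CARD('a) \<le> card C)" for m
  proof (induct m rule: less_induct)
    case (less m)
    show ?case
    proof (intro allI impI)
      fix H :: "'a set"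
      assume a: "subgrp H \<and> card (UNIV - H) = m \<and> (\<exists>C. finite C \<and> (\<forall>\<chi>\<in>C. char_on H \<chi>) \<and> card H \<le> card C)"
      show "\<exists>C. finite C \<and> (\<forall>\<chi>\<in>C. char_on (UNIV::'a set) \<chi>) \<and> CARD('a) \<le> card C"
      proof (cases "H = UNIV")
        case True
        from a obtain C where C: "finite C" "\<forall>\<chi>\<in>C. char_on H \<chi>" "card H \<le> card C" by blast
        show ?thesis using C True by (intro exI[of _ C]) simp
      next
        case False
        then obtain g where g: "g \<notin> H" by auto
        from a obtain C where C: "finite C" "\<forall>\<chi>\<in>C. char_on H \<chi>" "card H \<le> card C" by blast
        from extend_step[OF _ g C] a obtain H' C' where H': "subgrp H'" "H \<subset> H'" "finite C'"
          "\<forall>\<psi>\<in>C'. char_on H' \<psi>" "card H' \<le> card C'" by blast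
        have "UNIV - H' \<subset> UNIV - H" using H'(2) by auto
        then have "card (UNIV - H') < m" using a by (metis finite psubset_card_mono)
        then show ?thesis using less[rule_format, of "card (UNIV - H')" H'] H' by blast
      qed
    qed
  qed
  have base: "subgrp ({0}::'a set)" by (simp add: subgrp_def)
  have "char_on {0::'a} (\<lambda>x. if x = 0 then 1 else 0)" by (simp add: char_on_def)
  then have "\<exists>C. finite C \<and> (\<forall>\<chi>\<in>C. char_on {0::'a} \<chi>) \<and> card {0::'a} \<le> card C"
    by (intro exI[of _ "{\<lambda>x. if x = 0 then 1 else 0}"]) auto
  then show ?thesis using main[of "card (UNIV - {0::'a})"] base by blast
qed

abbreviation "is_char (\<chi>::'a::{ab_group_add,finite} \<Rightarrow> complex) \<equiv> char_on UNIV \<chi>"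

lemma char_mult: "is_char \<chi> \<Longrightarrow> \<chi> (a + b) = \<chi> a * \<chi> b"
  unfolding char_on_def by blast

lemma char_nz: "is_char \<chi> \<Longrightarrow> \<chi> a \<noteq> 0"
  unfolding char_on_def by blast

lemma subgrp_UNIV: "subgrp UNIV" by (simp add: subgrp_def)

lemma char_0: "is_char \<chi> \<Longrightarrow> \<chi> 0 = 1"
  using char_on_0 subgrp_UNIV by blast

lemma char_norm: assumes "is_char \<chi>" shows "norm (\<chi> a) = 1"
proof -
  obtain k where k: "k > 0" "nmul k a = 0" using order_exists by blast
  have "\<chi> a ^ k = 1" using char_on_nmul[OF assms subgrp_UNIV, of a k] k char_0[OF assms] by simp
  then have "norm (\<chi> a) ^ k = 1 ^ k" by (metis norm_one norm_power power_one)
  then show ?thesis using k(1) power_eq_iff_eq_base[of k "norm (\<chi> a)" 1] by simp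
qed

lemma char_cnj_mult: assumes "is_char \<chi>" shows "cnj (\<chi> a) * \<chi> a = 1"
proof -
  have "\<chi> a * cnj (\<chi> a) = complex_of_real ((norm (\<chi> a))\<^sup>2)" by (rule complex_norm_square[symmetric])
  then show ?thesis using char_norm[OF assms] by (simp add: mult.commute)
qed

lemma char_uminus: assumes "is_char \<chi>" shows "\<chi> (- a) = cnj (\<chi> a)"
proof -
  have "\<chi> (- a) * \<chi> a = 1" using char_mult[OF assms, of "-a" a] char_0[OF assms] by simp
  then show ?thesis using char_cnj_mult[OF assms, of a] char_nz[OF assms, of a]
    by (metis mult_cancel_right)
qed

lemma char_prod: "is_char \<chi> \<Longrightarrow> is_char \<psi> \<Longrightarrow> is_char (\<lambda>g. \<chi> g * \<psi> g)"
  unfolding char_on_def by (auto simp: algebra_simps)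

lemma char_cnj: "is_char \<chi> \<Longrightarrow> is_char (\<lambda>g. cnj (\<chi> g))"
  unfolding char_on_def by auto

lemma char_pow: "is_char \<chi> \<Longrightarrow> is_char (\<lambda>g. \<chi> g ^ m)"
  unfolding char_on_def by (auto simp: power_mult_distrib)

lemma char_sum: fixes \<chi> :: "'a::{ab_group_add,finite} \<Rightarrow> complex" assumes "is_char \<chi>"
  shows "(\<Sum>g\<in>UNIV. \<chi> g) = (if \<chi> = (\<lambda>_. 1) then of_nat CARD('a) else 0)"
proof (cases "\<chi> = (\<lambda>_. 1)")
  case True then show ?thesis by simp
next
  case False
  then obtain h where h: "\<chi> h \<noteq> 1" by auto
  have "(\<Sum>g\<in>UNIV. \<chi> g) = (\<Sum>g\<in>UNIV. \<chi> (h + g))"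
    by (rule sum.reindex_bij_witness[of _ "\<lambda>g. h + g" "\<lambda>g. g - h"]) (auto simp: algebra_simps)
  also have "\<dots> = \<chi> h * (\<Sum>g\<in>UNIV. \<chi> g)"
    using char_mult[OF assms] by (simp add: sum_distrib_left)
  finally have "(1 - \<chi> h) * (\<Sum>g\<in>UNIV. \<chi> g) = 0" by (simp add: algebra_simps)
  then show ?thesis using h False by simp
qed

lemma char_sum_re_nonneg: fixes \<chi> :: "'a::{ab_group_add,finite} \<Rightarrow> complex"
  assumes "is_char \<chi>" shows "0 \<le> Re (\<Sum>g\<in>UNIV. \<chi> g)"
  unfolding char_sum[OF assms] by simp

lemma char_orth: fixes \<chi> \<psi> :: "'a::{ab_group_add,finite} \<Rightarrow> complex"
  assumes "is_char \<chi>" "is_char \<psi>"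
  shows "(\<Sum>g\<in>UNIV. \<chi> g * cnj (\<psi> g)) = (if \<chi> = \<psi> then of_nat CARD('a) else 0)"
proof -
  have c: "is_char (\<lambda>g. \<chi> g * cnj (\<psi> g))" by (intro char_prod char_cnj assms)
  have "(\<lambda>g. \<chi> g * cnj (\<psi> g)) = (\<lambda>_. 1) \<longleftrightarrow> \<chi> = \<psi>"
  proof
    assume e: "(\<lambda>g. \<chi> g * cnj (\<psi> g)) = (\<lambda>_. 1)"
    show "\<chi> = \<psi>"
    proof
      fix g
      have "\<chi> g * cnj (\<psi> g) * \<psi> g = \<psi> g" using fun_cong[OF e, of g] by simp
      then show "\<chi> g = \<psi> g" using char_cnj_mult[OF assms(2), of g] by (simp add: mult.assoc)
    qed
  next
    assume "\<chi> = \<psi>" then show "(\<lambda>g. \<chi> g * cnj (\<psi> g)) = (\<lambda>_. 1)"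
      using char_cnj_mult[OF assms(2)] by (simp add: mult.commute)
  qed
  then show ?thesis using char_sum[OF c] by simp
qed

definition lam :: "'a::{ab_group_add,finite} set \<Rightarrow> ('a \<Rightarrow> complex) \<Rightarrow> complex" where
  "lam S \<chi> = (\<Sum>s\<in>S. \<chi> s)"

lemma poly_bound:
  fixes x :: real assumes "-1 \<le> x" "x \<le> 1"
  shows "x \<le> 2/9 * (1/2 + 9/4 * x + 11/4 * x^2 - x^4)"
    and "0 \<le> 2/9 * (1/2 + 9/4 * x + 11/4 * x^2 - x^4)"
proof -
  have e1: "2/9 * (1/2 + 9/4 * x + 11/4 * x^2 - x^4) - x = 2/9 * ((x - 1/2)^2 * ((1 - x) * (x + 2)))"
    by (simp add: power2_eq_square power4_eq_xxxx field_simps)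
  have "0 \<le> (x - 1/2)^2 * ((1 - x) * (x + 2))" using assms by (intro mult_nonneg_nonneg) auto
  then show "x \<le> 2/9 * (1/2 + 9/4 * x + 11/4 * x^2 - x^4)" using e1 by linarith
  have e2: "2/9 * (1/2 + 9/4 * x + 11/4 * x^2 - x^4) = 2/9 * ((x + 1/2)^2 * ((2 - x) * (1 + x)))"
    by (simp add: power2_eq_square power4_eq_xxxx field_simps)
  have "0 \<le> (x + 1/2)^2 * ((2 - x) * (1 + x))" using assms by (intro mult_nonneg_nonneg) auto
  then show "0 \<le> 2/9 * (1/2 + 9/4 * x + 11/4 * x^2 - x^4)" using e2 by linarith
qed

lemma re_sq: fixes z :: complex assumes "norm z = 1"
  shows "(Re z)^2 = (1 + Re (z^2)) / 2"
proof -
  have "(Re z)^2 + (Im z)^2 = 1" using assms cmod_power2[of z] by simp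
  moreover have "Re (z^2) = (Re z)^2 - (Im z)^2" by (simp add: power2_eq_square)
  ultimately show ?thesis by simp
qed

lemma lin_aux2: "(a::real) \<le> 2/9 * (n/2 + 9/4 * 0 + 11/4 * (n/2) - q) \<Longrightarrow> 3 * n / 8 \<le> q \<Longrightarrow> a \<le> n / 3"
  by (simp add: field_simps)

lemma lin_aux: "(X::real) = (1 + 2 * a + (1 + b) / 2) / 4 \<Longrightarrow> X = (3 + 4 * a + b) / 8"
  by (simp add: field_simps)

lemma re_four: fixes z :: complex assumes "norm z = 1"
  shows "(Re z)^4 = (3 + 4 * Re (z^2) + Re (z^4)) / 8"
proof -
  have n2: "norm (z^2) = 1" using assms by (simp add: norm_power)
  have "(Re z)^4 = ((Re z)^2)^2" by simp
  also have "\<dots> = ((1 + Re (z^2)) / 2)^2" by (simp only: re_sq[OF assms])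
  also have "\<dots> = (1 + 2 * Re (z^2) + (Re (z^2))^2) / 4" by (simp add: power2_eq_square algebra_simps)
  also have "(Re (z^2))^2 = (1 + Re ((z^2)^2)) / 2" using re_sq[OF n2] .
  also have "(z^2)^2 = z^4" by simp
  finally have "(Re z)^4 = (1 + 2 * Re (z^2) + (1 + Re (z^4)) / 2) / 4" .
  then show ?thesis by (rule lin_aux)
qed

lemma sum_re: "Re (\<Sum>g\<in>A. f g) = (\<Sum>g\<in>A. Re (f g))" by (rule Re_sum)

lemma nonreal_bound:
  fixes \<chi> :: "'a::{ab_group_add,finite} \<Rightarrow> complex"
  assumes c: "is_char \<chi>" and nr: "\<not> (\<forall>g. \<chi> g ^ 2 = 1)"
  shows "Re (lam S \<chi>) \<le> real CARD('a) / 3"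
proof -
  define n where "n = real CARD('a)"
  define x where "x = (\<lambda>g. Re (\<chi> g))"
  define p where "p = (\<lambda>y::real. 2/9 * (1/2 + 9/4 * y + 11/4 * y^2 - y^4))"
  have xb: "-1 \<le> x g \<and> x g \<le> 1" for g
    using abs_Re_le_cmod[of "\<chi> g"] char_norm[OF c, of g] unfolding x_def by auto
  have "Re (lam S \<chi>) = (\<Sum>s\<in>S. x s)" unfolding lam_def x_def by (simp add: Re_sum)
  also have "\<dots> \<le> (\<Sum>s\<in>S. p (x s))" using poly_bound(1) xb unfolding p_def by (intro sum_mono) auto
  also have "\<dots> \<le> (\<Sum>g\<in>UNIV. p (x g))" using poly_bound(2) xb unfolding p_def
    by (intro sum_mono2) auto
  finally have L: "Re (lam S \<chi>) \<le> (\<Sum>g\<in>UNIV. p (x g))" .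
  have "(\<Sum>g\<in>UNIV. p (x g)) = 2/9 * (\<Sum>g\<in>UNIV. 1/2 + 9/4 * x g + 11/4 * (x g)^2 - (x g)^4)"
    unfolding p_def by (simp add: sum_distrib_left)
  also have "(\<Sum>g\<in>UNIV. 1/2 + 9/4 * x g + 11/4 * (x g)^2 - (x g)^4)
     = n/2 + 9/4 * (\<Sum>g\<in>UNIV. x g) + 11/4 * (\<Sum>g\<in>UNIV. (x g)^2) - (\<Sum>g\<in>UNIV. (x g)^4)"
    unfolding n_def by (simp add: sum.distrib sum_subtractf sum_distrib_left)
  finally have P: "(\<Sum>g\<in>UNIV. p (x g)) = 2/9 * (n/2 + 9/4 * (\<Sum>g\<in>UNIV. x g)
     + 11/4 * (\<Sum>g\<in>UNIV. (x g)^2) - (\<Sum>g\<in>UNIV. (x g)^4))" .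
  have S1: "(\<Sum>g\<in>UNIV. x g) = 0"
  proof -
    have "\<chi> \<noteq> (\<lambda>_. 1)"
    proof
      assume "\<chi> = (\<lambda>_. 1)" then show False using nr by simp
    qed
    then show ?thesis using char_sum[OF c] unfolding x_def by (simp add: Re_sum[symmetric] del: Re_sum)
  qed
  have S2: "(\<Sum>g\<in>UNIV. (x g)^2) = n / 2"
  proof -
    have c2: "is_char (\<lambda>g. \<chi> g ^ 2)" by (rule char_pow[OF c])
    have nt: "(\<lambda>g. \<chi> g ^ 2) \<noteq> (\<lambda>_. 1)" using nr by (auto simp: fun_eq_iff)
    have "(\<Sum>g\<in>UNIV. (x g)^2) = (\<Sum>g\<in>UNIV. (1 + Re (\<chi> g ^ 2)) / 2)"
      unfolding x_def by (intro sum.cong refl) (simp only: re_sq[OF char_norm[OF c]])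
    also have "\<dots> = n / 2 + Re (\<Sum>g\<in>UNIV. \<chi> g ^ 2) / 2"
      unfolding n_def by (simp add: sum.distrib sum_divide_distrib[symmetric] Re_sum add_divide_distrib)
    also have "Re (\<Sum>g\<in>UNIV. \<chi> g ^ 2) = 0" using char_sum[OF c2] nt by simp
    finally show ?thesis by simp
  qed
  have S4: "(\<Sum>g\<in>UNIV. (x g)^4) \<ge> 3 * n / 8"
  proof -
    have c2: "is_char (\<lambda>g. \<chi> g ^ 2)" by (rule char_pow[OF c])
    have c4: "is_char (\<lambda>g. \<chi> g ^ 4)" by (rule char_pow[OF c])
    have nt: "(\<lambda>g. \<chi> g ^ 2) \<noteq> (\<lambda>_. 1)" using nr by (auto simp: fun_eq_iff)
    have "(\<Sum>g\<in>UNIV. (x g)^4) = (\<Sum>g\<in>UNIV. (3 + 4 * Re (\<chi> g ^ 2) + Re (\<chi> g ^ 4)) / 8)"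
      unfolding x_def by (intro sum.cong refl) (simp only: re_four[OF char_norm[OF c]])
    also have "\<dots> = 3 * n / 8 + Re (\<Sum>g\<in>UNIV. \<chi> g ^ 2) / 2 + Re (\<Sum>g\<in>UNIV. \<chi> g ^ 4) / 8"
      unfolding n_def by (simp add: sum.distrib sum_divide_distrib[symmetric] Re_sum
          add_divide_distrib sum_distrib_left)
    also have "Re (\<Sum>g\<in>UNIV. \<chi> g ^ 2) = 0" using char_sum[OF c2] nt by simp
    finally show ?thesis using char_sum_re_nonneg[OF c4] by simp
  qed
  have "Re (lam S \<chi>) \<le> 2/9 * (n/2 + 9/4 * 0 + 11/4 * (n/2) - (\<Sum>g\<in>UNIV. (x g)^4))"
    using L unfolding P S1 S2 .
  then have "Re (lam S \<chi>) \<le> n / 3" using S4 by (rule lin_aux2)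
  then show ?thesis unfolding n_def .
qed

lemma char_pm1: assumes "\<chi> g ^ 2 = 1" shows "\<chi> g = of_real (Re (\<chi> g)) \<and> (Re (\<chi> g) = 1 \<or> Re (\<chi> g) = -1)"
proof -
  have "\<chi> g = 1 \<or> \<chi> g = -1" using assms by (simp add: power2_eq_1_iff)
  then show ?thesis by auto
qed

lemma real_pair_bound:
  fixes \<chi> \<psi> :: "'a::{ab_group_add,finite} \<Rightarrow> complex"
  assumes c: "is_char \<chi>" "is_char \<psi>" and ne: "\<chi> \<noteq> \<psi>" "\<chi> \<noteq> (\<lambda>_. 1)" "\<psi> \<noteq> (\<lambda>_. 1)"
    and r: "\<forall>g. \<chi> g ^ 2 = 1" "\<forall>g. \<psi> g ^ 2 = 1"
  shows "Re (lam S \<chi>) + Re (lam S \<psi>) \<le> real CARD('a) / 2"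
proof -
  define n where "n = real CARD('a)"
  define a where "a = (\<lambda>g. Re (\<chi> g))"
  define b where "b = (\<lambda>g. Re (\<psi> g))"
  have ab: "\<chi> g = of_real (a g) \<and> (a g = 1 \<or> a g = -1)" "\<psi> g = of_real (b g) \<and> (b g = 1 \<or> b g = -1)" for g
    using char_pm1[of \<chi> g] char_pm1[of \<psi> g] r unfolding a_def b_def by auto
  define q where "q = (\<lambda>g. (a g + b g) / 2 + (a g + b g)^2 / 4)"
  have qb: "a g + b g \<le> q g \<and> 0 \<le> q g" for g
    using ab(1)[of g] ab(2)[of g] unfolding q_def by (auto simp: power2_eq_square)
  have "Re (lam S \<chi>) + Re (lam S \<psi>) = (\<Sum>s\<in>S. a s + b s)"
    unfolding lam_def a_def b_def by (simp add: Re_sum sum.distrib)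
  also have "\<dots> \<le> (\<Sum>s\<in>S. q s)" using qb by (intro sum_mono) auto
  also have "\<dots> \<le> (\<Sum>g\<in>UNIV. q g)" using qb by (intro sum_mono2) auto
  also have "\<dots> = (\<Sum>g\<in>UNIV. a g) / 2 + (\<Sum>g\<in>UNIV. b g) / 2 + n / 2 + (\<Sum>g\<in>UNIV. a g * b g) / 2"
  proof -
    have "q g = a g / 2 + b g / 2 + 1/2 + a g * b g / 2" for g
      using ab(1)[of g] ab(2)[of g] unfolding q_def by (auto simp: power2_eq_square algebra_simps)
    then show ?thesis unfolding n_def by (simp add: sum.distrib sum_divide_distrib[symmetric])
  qed
  also have "(\<Sum>g\<in>UNIV. a g) = 0" using char_sum[OF c(1)] ne(2) unfolding a_def by (simp add: Re_sum[symmetric] del: Re_sum)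
  also have "(\<Sum>g\<in>UNIV. b g) = 0" using char_sum[OF c(2)] ne(3) unfolding b_def by (simp add: Re_sum[symmetric] del: Re_sum)
  also have "(\<Sum>g\<in>UNIV. a g * b g) = 0"
  proof -
    have cp: "is_char (\<lambda>g. \<chi> g * \<psi> g)" by (rule char_prod[OF c])
    have "(\<lambda>g. \<chi> g * \<psi> g) \<noteq> (\<lambda>_. 1)"
    proof
      assume e: "(\<lambda>g. \<chi> g * \<psi> g) = (\<lambda>_. 1)"
      have "\<chi> g = \<psi> g" for g
        using fun_cong[OF e, of g] ab(1)[of g] ab(2)[of g] by auto
      then show False using ne(1) by auto
    qed
    then have "(\<Sum>g\<in>UNIV. \<chi> g * \<psi> g) = 0" using char_sum[OF cp] by simp
    moreover have "\<chi> g * \<psi> g = of_real (a g * b g)" for g using ab(1)[of g] ab(2)[of g] by simp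
    ultimately have F: "(\<Sum>g\<in>UNIV. complex_of_real (a g * b g)) = 0" by simp
    show ?thesis by (metis F of_real_sum of_real_eq_0_iff)
  qed
  finally show ?thesis unfolding n_def by simp
qed

lemma elem_enum_bij: "bij_betw (elem_enum :: nat \<Rightarrow> 'a::finite) {..<CARD('a)} UNIV"
proof -
  have "\<exists>f. bij_betw f {..<CARD('a)} (UNIV::'a set)"
    using ex_bij_betw_nat_finite[of "UNIV::'a set"] by (simp add: atLeast0LessThan)
  then show ?thesis unfolding elem_enum_def by (rule someI_ex)
qed

lemma lam_neg: assumes "uminus ` S = S"
  shows "(\<Sum>s\<in>S. \<chi> (- s)) = lam S (\<chi>::'a::{ab_group_add,finite} \<Rightarrow> complex)"
proof -
  have "inj_on uminus S" by (rule inj_onI) simp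
  then have "sum \<chi> (uminus ` S) = sum (\<chi> \<circ> uminus) S" by (rule sum.reindex)
  then show ?thesis using assms unfolding lam_def by simp
qed

lemma eig_eq:
  fixes \<chi> :: "'a::{ab_group_add,finite} \<Rightarrow> complex"
  assumes c: "is_char \<chi>" and sym: "uminus ` S = S"
  shows "(\<Sum>x\<in>UNIV. (if a - x \<in> S then 1 else 0) * \<chi> x) = \<chi> a * lam S \<chi>"
proof -
  have "(\<Sum>x\<in>UNIV. (if a - x \<in> S then 1 else 0) * \<chi> x) = (\<Sum>x\<in>UNIV. if a - x \<in> S then \<chi> x else 0)"
    by (intro sum.cong) auto
  also have "\<dots> = (\<Sum>x\<in>{x\<in>UNIV. a - x \<in> S}. \<chi> x)" by (rule sum.inter_filter[symmetric]) simp
  also have "{x\<in>UNIV. a - x \<in> S} = (\<lambda>s. a - s) ` S"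
  proof -
    have "x \<in> (\<lambda>s. a - s) ` S \<longleftrightarrow> a - x \<in> S" for x
    proof
      assume "x \<in> (\<lambda>s. a - s) ` S" then obtain s where "s \<in> S" "x = a - s" by blast
      then show "a - x \<in> S" by simp
    next
      assume "a - x \<in> S" then show "x \<in> (\<lambda>s. a - s) ` S" by (rule rev_image_eqI) simp
    qed
    then show ?thesis by blast
  qed
  also have "sum \<chi> ((\<lambda>s. a - s) ` S) = (\<Sum>s\<in>S. \<chi> (a - s))"
    by (subst sum.reindex) (auto intro: inj_onI)
  also have "\<dots> = (\<Sum>s\<in>S. \<chi> a * \<chi> (- s))"
    by (intro sum.cong refl) (metis char_mult[OF c] diff_conv_add_uminus)
  also have "\<dots> = \<chi> a * (\<Sum>s\<in>S. \<chi> (- s))" by (rule sum_distrib_left[symmetric])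
  also have "\<dots> = \<chi> a * lam S \<chi>" using lam_neg[OF sym] by simp
  finally show ?thesis .
qed

lemma lam_real:
  fixes \<chi> :: "'a::{ab_group_add,finite} \<Rightarrow> complex"
  assumes c: "is_char \<chi>" and sym: "uminus ` S = S"
  shows "lam S \<chi> = of_real (Re (lam S \<chi>))"
proof -
  have "lam S \<chi> = (\<Sum>s\<in>S. \<chi> (- s))" using lam_neg[OF sym] by simp
  also have "\<dots> = (\<Sum>s\<in>S. cnj (\<chi> s))" using char_uminus[OF c] by simp
  also have "\<dots> = cnj (lam S \<chi>)" unfolding lam_def by (simp add: cnj_sum)
  finally have L: "lam S \<chi> = cnj (lam S \<chi>)" .
  have "Im (lam S \<chi>) = 0" using arg_cong[OF L, of Im] by simp
  then show ?thesis by (simp add: complex_eq_iff)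
qed

lemma prod_map_of_real:
  "(\<Prod>a\<leftarrow>map (\<lambda>x. complex_of_real (f x)) xs. [:- a, 1:]) = map_poly complex_of_real (\<Prod>r\<leftarrow>map f xs. [:- r, 1:])"
proof -
  interpret rp: map_poly_inj_comm_ring_hom "complex_of_real" ..
  show ?thesis
  proof (induct xs)
    case Nil then show ?case by simp
  next
    case (Cons a xs)
    have "map_poly complex_of_real ([:- f a, 1:] * (\<Prod>r\<leftarrow>map f xs. [:- r, 1:]))
      = map_poly complex_of_real [:- f a, 1:] * map_poly complex_of_real (\<Prod>r\<leftarrow>map f xs. [:- r, 1:])"
      by (rule rp.hom_mult)
    moreover have "map_poly complex_of_real [:- f a, 1:] = [:- complex_of_real (f a), 1:]" by simp
    ultimately show ?case using Cons by (simp del: mult_pCons_left)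
  qed
qed

lemma order_prod_linear: "order x (\<Prod>r\<leftarrow>rs. [:- r, 1:]) = count (mset rs) (x::real)"
proof (induct rs)
  case Nil then show ?case by (simp add: order_1_eq_0)
next
  case (Cons r rs)
  have nz: "(\<Prod>r\<leftarrow>rs. [:- r, 1:]) \<noteq> (0 :: real poly)" by (auto simp: prod_list_zero_iff)
  have "order x ([:- r, 1:] * (\<Prod>r\<leftarrow>rs. [:- r, 1:])) = order x [:- r, 1:] + order x (\<Prod>r\<leftarrow>rs. [:- r, 1:])"
    by (intro order_mult no_zero_divisors nz) simp
  then show ?case using Cons by (simp add: order_linear' del: mult_pCons_left)
qed

lemma eig_mset_cayley:
  fixes S :: "'a::{ab_group_add,finite} set"
  assumes sym: "uminus ` S = S"
  shows "\<exists>chs. distinct chs \<and> length chs = CARD('a) \<and> (\<forall>\<chi>\<in>set chs. is_char \<chi>) \<and>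
     eig_mset (cayley_adj S) = mset (map (\<lambda>\<chi>. Re (lam S \<chi>)) chs)"
proof -
  define n where "n = CARD('a)"
  have npos: "0 < n" unfolding n_def by simp
  obtain C :: "('a \<Rightarrow> complex) set" where C: "finite C" "\<forall>\<chi>\<in>C. is_char \<chi>" "n \<le> card C"
    using chars_exist unfolding n_def by blast
  obtain C' where C': "C' \<subseteq> C" "card C' = n" "finite C'"
    using obtain_subset_with_card_n[OF C(3)] by metis
  obtain chs where chs: "set chs = C'" "distinct chs" using finite_distinct_list[OF C'(3)] by blast
  have len: "length chs = n" using distinct_card[OF chs(2)] chs(1) C'(2) by simp
  have cc: "is_char (chs ! j)" if "j < n" for j using chs(1) C'(1) C(2) len nth_mem that by blast
  define e where "e = (elem_enum :: nat \<Rightarrow> 'a)"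
  have ebij: "bij_betw e {..<n} UNIV" unfolding e_def n_def by (rule elem_enum_bij)
  define A where "A = cayley_adj S"
  define Ac where "Ac = map_mat complex_of_real A"
  define X where "X = mat n n (\<lambda>(i,j). (chs ! j) (e i))"
  define D where "D = mat n n (\<lambda>(i,j). if i = j then lam S (chs ! i) else 0)"
  define Y where "Y = mat n n (\<lambda>(i,j). cnj ((chs ! i) (e j)) / of_nat n)"
  have A: "A \<in> carrier_mat n n" unfolding A_def cayley_adj_def n_def by simp
  have Ac: "Ac \<in> carrier_mat n n" using A unfolding Ac_def by simp
  have X: "X \<in> carrier_mat n n" "D \<in> carrier_mat n n" "Y \<in> carrier_mat n n"
    unfolding X_def D_def Y_def by auto
  have Acij: "Ac $$ (i,j) = (if e i - e j \<in> S then 1 else 0)" if "i < n" "j < n" for i j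
    using that unfolding Ac_def A_def cayley_adj_def n_def e_def by simp
  have AX: "Ac * X = X * D"
  proof (rule eq_matI)
    fix i j assume ij: "i < dim_row (X * D)" "j < dim_col (X * D)"
    then have ij': "i < n" "j < n" using X by auto
    have "(Ac * X) $$ (i,j) = (\<Sum>k\<in>{0..<n}. Ac $$ (i,k) * X $$ (k,j))"
      using ij' Ac X by (simp add: scalar_prod_def)
    also have "\<dots> = (\<Sum>k<n. (if e i - e k \<in> S then 1 else 0) * (chs ! j) (e k))"
      unfolding atLeast0LessThan by (intro sum.cong refl) (simp add: Acij ij' X_def)
    also have "\<dots> = (\<Sum>x\<in>UNIV. (if e i - x \<in> S then 1 else 0) * (chs ! j) x)"
      using sum.reindex_bij_betw[OF ebij, of "\<lambda>x. (if e i - x \<in> S then 1 else 0) * (chs ! j) x"] .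
    also have "\<dots> = (chs ! j) (e i) * lam S (chs ! j)" by (rule eig_eq[OF cc[OF ij'(2)] sym])
    also have "\<dots> = (X * D) $$ (i,j)"
    proof -
      have "(X * D) $$ (i,j) = (\<Sum>k\<in>{0..<n}. X $$ (i,k) * D $$ (k,j))"
        using ij' X by (simp add: scalar_prod_def)
      also have "\<dots> = (\<Sum>k\<in>{0..<n}. if k = j then (chs ! j) (e i) * lam S (chs ! j) else 0)"
        by (intro sum.cong refl) (auto simp: X_def D_def ij')
      also have "\<dots> = (chs ! j) (e i) * lam S (chs ! j)" using ij' by simp
      finally show ?thesis by simp
    qed
    finally show "(Ac * X) $$ (i,j) = (X * D) $$ (i,j)" .
  qed (use Ac X in auto)
  have YX: "Y * X = 1\<^sub>m n"
  proof (rule eq_matI)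
    fix i j assume "i < dim_row (1\<^sub>m n :: complex mat)" "j < dim_col (1\<^sub>m n :: complex mat)"
    then have ij: "i < n" "j < n" by auto
    have "(Y * X) $$ (i,j) = (\<Sum>k\<in>{0..<n}. Y $$ (i,k) * X $$ (k,j))"
      using ij X by (simp add: scalar_prod_def)
    also have "\<dots> = (\<Sum>k<n. (chs ! j) (e k) * cnj ((chs ! i) (e k))) / of_nat n"
      unfolding atLeast0LessThan sum_divide_distrib
      by (intro sum.cong refl) (simp add: ij X_def Y_def)
    also have "(\<Sum>k<n. (chs ! j) (e k) * cnj ((chs ! i) (e k))) = (\<Sum>x\<in>UNIV. (chs ! j) x * cnj ((chs ! i) x))"
      using sum.reindex_bij_betw[OF ebij, of "\<lambda>x. (chs ! j) x * cnj ((chs ! i) x)"] .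
    also have "\<dots> = (if chs ! j = chs ! i then of_nat n else 0)"
      using char_orth[OF cc[OF ij(2)] cc[OF ij(1)]] unfolding n_def .
    also have "(if chs ! j = chs ! i then of_nat n else 0) / of_nat n = (1\<^sub>m n :: complex mat) $$ (i,j)"
      using ij chs(2) len npos nth_eq_iff_index_eq[OF chs(2), of j i] by auto
    finally show "(Y * X) $$ (i,j) = (1\<^sub>m n :: complex mat) $$ (i,j)" .
  qed (use X in auto)
  have XY: "X * Y = 1\<^sub>m n" using mat_mult_left_right_inverse[OF X(3) X(1) YX] .
  have AcD: "Ac = X * D * Y"
  proof -
    have "Ac = Ac * (X * Y)" using Ac XY by simp
    also have "\<dots> = (Ac * X) * Y" using Ac X by (simp add: assoc_mult_mat)
    finally show ?thesis using AX by simp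
  qed
  have sim: "similar_mat Ac D" by (rule similar_matI[of Ac D X Y n]) (use Ac X XY YX AcD in auto)
  have ut: "upper_triangular D" unfolding upper_triangular_def D_def by auto
  define rs where "rs = map (\<lambda>\<chi>. Re (lam S \<chi>)) chs"
  have diag: "diag_mat D = map (\<lambda>r. complex_of_real r) rs"
  proof (rule nth_equalityI)
    show "length (diag_mat D) = length (map complex_of_real rs)"
      unfolding diag_mat_def rs_def D_def using len by simp
    fix i assume "i < length (diag_mat D)"
    then have i: "i < n" unfolding diag_mat_def D_def by simp
    show "diag_mat D ! i = map complex_of_real rs ! i"
      unfolding diag_mat_def rs_def D_def using i len lam_real[OF cc[OF i] sym] by simp
  qed
  have "map_poly complex_of_real (char_poly A) = char_poly Ac"
    unfolding Ac_def by (rule of_real_hom.char_poly_hom[OF A, symmetric])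
  also have "\<dots> = char_poly D" by (rule char_poly_similar[OF sim])
  also have "\<dots> = (\<Prod>a\<leftarrow>diag_mat D. [:- a, 1:])" by (rule char_poly_upper_triangular[OF X(2) ut])
  also have "\<dots> = map_poly complex_of_real (\<Prod>r\<leftarrow>rs. [:- r, 1:])"
    unfolding diag using prod_map_of_real[of "\<lambda>r. r" rs] by simp
  finally have cp: "char_poly A = (\<Prod>r\<leftarrow>rs. [:- r, 1:])"
  proof -
    interpret rp: map_poly_inj_comm_ring_hom "complex_of_real" ..
    assume "map_poly complex_of_real (char_poly A) = map_poly complex_of_real (\<Prod>r\<leftarrow>rs. [:- r, 1:])"
    then show ?thesis by simp
  qed
  have "eig_mset A = mset rs"
    unfolding eig_mset_def cp order_prod_linear by (rule count_inverse)
  then show ?thesis using chs(2) len cc chs(1) unfolding A_def rs_def n_def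
    by (intro exI[of _ chs]) (auto simp: in_set_conv_nth)
qed

lemma third_le:
  fixes xs :: "real list"
  assumes len: "3 \<le> length xs" and cnt: "length (filter (\<lambda>x. t < x) xs) \<le> 2"
  shows "rev (sort xs) ! 2 \<le> t"
proof (rule ccontr)
  assume "\<not> ?thesis" then have c: "t < rev (sort xs) ! 2" by simp
  define L where "L = rev (sort xs)"
  have lenL: "length L = length xs" unfolding L_def by simp
  have mono: "L ! j \<le> L ! i" if "i \<le> j" "j < length L" for i j
  proof -
    have s: "sorted (sort xs)" by simp
    have "L ! i = sort xs ! (length xs - Suc i)" "L ! j = sort xs ! (length xs - Suc j)"
      using that lenL unfolding L_def by (simp_all add: rev_nth)
    then show ?thesis using sorted_nth_mono[OF s, of "length xs - Suc j" "length xs - Suc i"] that lenL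
      by simp
  qed
  have P: "t < L ! i" if "i \<le> 2" for i
    using mono[of i 2] that c len lenL unfolding L_def by fastforce
  have "{0,1,2} \<subseteq> {i. i < length L \<and> t < L ! i}" using P len lenL by auto
  then have "card {0,1,2::nat} \<le> card {i. i < length L \<and> t < L ! i}"
    by (intro card_mono) auto
  also have "\<dots> = length (filter (\<lambda>x. t < x) L)" by (rule length_filter_conv_card[symmetric])
  also have "\<dots> = length (filter (\<lambda>x. t < x) xs)"
    unfolding L_def by (simp add: rev_filter[symmetric] filter_sort)
  finally show False using cnt by simp
qed

theorem theorem3p5:
  fixes S :: "('a::{ab_group_add,finite}) set"
  assumes "CARD('a) \<ge> 3"
    and "0 \<notin> S"
    and "uminus ` S = S"
  shows "kth_largest_eig 3 (cayley_adj S) / real CARD('a) \<le> 1 / 3"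
proof -
  obtain chs where chs: "distinct chs" "length chs = CARD('a)" "\<forall>\<chi>\<in>set chs. is_char \<chi>"
    "eig_mset (cayley_adj S) = mset (map (\<lambda>\<chi>. Re (lam S \<chi>)) chs)"
    using eig_mset_cayley[OF assms(3)] by blast
  define n where "n = real CARD('a)"
  have npos: "0 < n" unfolding n_def by simp
  define rl where "rl = (\<lambda>\<chi>. Re (lam S \<chi>))"
  have k: "kth_largest_eig 3 (cayley_adj S) = rev (sort (map rl chs)) ! 2"
    unfolding kth_largest_eig_def chs(4) rl_def sorted_list_of_multiset_mset by simp
  define R where "R = {\<chi>\<in>set chs. n/3 < rl \<chi> \<and> \<chi> \<noteq> (\<lambda>_. 1)}"
  have R1: "card R \<le> 1"
  proof -
    have real: "\<forall>g. \<chi> g ^ 2 = 1" if "\<chi> \<in> R" for \<chi>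
    proof (rule ccontr)
      assume "\<not> (\<forall>g. \<chi> g ^ 2 = 1)"
      then have "rl \<chi> \<le> n / 3" using nonreal_bound[of \<chi> S] that chs(3)
        unfolding R_def rl_def n_def by auto
      then show False using that unfolding R_def by auto
    qed
    have "\<chi> = \<psi>" if "\<chi> \<in> R" "\<psi> \<in> R" for \<chi> \<psi>
    proof (rule ccontr)
      assume ne: "\<chi> \<noteq> \<psi>"
      have "rl \<chi> + rl \<psi> \<le> n / 2"
        using real_pair_bound[of \<chi> \<psi> S] ne real[OF that(1)] real[OF that(2)] that chs(3)
        unfolding R_def rl_def n_def by auto
      moreover have "n/3 < rl \<chi>" "n/3 < rl \<psi>" using that unfolding R_def by auto
      ultimately show False using npos by linarith
    qed
    moreover have "finite R" unfolding R_def by simp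
    ultimately show ?thesis using card_le_Suc0_iff_eq[of R] by simp
  qed
  have cnt: "length (filter (\<lambda>x. n/3 < x) (map rl chs)) \<le> 2"
  proof -
    have "length (filter (\<lambda>x. n/3 < x) (map rl chs)) = length (filter (\<lambda>\<chi>. n/3 < rl \<chi>) chs)"
      by (simp add: filter_map comp_def)
    also have "\<dots> = card (set (filter (\<lambda>\<chi>. n/3 < rl \<chi>) chs))"
      using distinct_card[OF distinct_filter[OF chs(1)]] by simp
    also have "set (filter (\<lambda>\<chi>. n/3 < rl \<chi>) chs) \<subseteq> insert (\<lambda>_. 1) R"
      unfolding R_def by auto
    then have "card (set (filter (\<lambda>\<chi>. n/3 < rl \<chi>) chs)) \<le> card (insert (\<lambda>_. 1) R)"
      unfolding R_def by (intro card_mono) auto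
    also have "\<dots> \<le> Suc (card R)" unfolding R_def by (simp add: card_insert_if)
    finally show ?thesis using R1 by simp
  qed
  have "rev (sort (map rl chs)) ! 2 \<le> n / 3"
    by (rule third_le) (use assms(1) chs(2) cnt in auto)
  then have "kth_largest_eig 3 (cayley_adj S) \<le> n / 3" using k by simp
  then show ?thesis using npos unfolding n_def[symmetric] by (simp add: pos_divide_le_eq)
qed

end
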